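(* Let $f(x_1,x_2)=(-2+x_1+x_2)^2$ and $g(x_1,x_2)=1-x_1^2-x_2^2$; the global minimum of $f$ on $\{x\in\mathbb{R}^2: g(x)\geqslant 0\}$ is $2(3-2\sqrt{2})$. For every integer $d\geqslant 1$, the order-$d$ SDSOS (dual) relaxation $$\sup_{\lambda,\sigma_0,\sigma_1} \lambda \quad\text{s.t.}\quad f-\lambda=\sigma_0+\sigma_1 g,\ \lambda\in\mathbb{R},\ \sigma_0\in \mathrm{SDSOS}_d,\ \sigma_1\in\mathrm{SDSOS}_{d-1},$$ and the corresponding relaxed moment (primal) problem $$\inf_y L_y(f)\quad\text{s.t.}\quad y_0=1,\ \text{every principal submatrix of size at most }2\text{ of } M_d(y) \text{ and of } M_{d-1}(gy)\text{ is positive semidefinite},$$ both have optimal value $4(1-\sqrt{2})$, which is strictly smaller than the global minimum $2(3-2\sqrt{2})$ (the gap equals $2$).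
   Context: For $\alpha\in\mathbb{N}^2$ write $x^\alpha=x_1^{\alpha_1}x_2^{\alpha_2}$ and $|\alpha|=\alpha_1+\alpha_2$. $\mathrm{SDSOS}_d$ denotes the set of polynomials of the form $\sum_k (p_k x^{\alpha(k)}+q_k x^{\beta(k)})^2$ (finite sum) with $p_k,q_k\in\mathbb{R}$ and $\alpha(k),\beta(k)\in\mathbb{N}^2$, $|\alpha(k)|,|\beta(k)|\leqslant d$ (scaled diagonally-dominant sums of squares). For $y=(y_\alpha)_{|\alpha|\leqslant 2d}$ and $p=\sum_\alpha p_\alpha x^\alpha$, $L_y(p)=\sum_\alpha p_\alpha y_\alpha$; $M_d(y)=(y_{\alpha+\beta})_{|\alpha|,|\beta|\leqslant d}$; $M_{d-1}(gy)=(y_{\alpha+\beta}-y_{\alpha+\beta+(2,0)}-y_{\alpha+\beta+(0,2)})_{|\alpha|,|\beta|\leqslant d-1}$. *)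

theory Defs
  imports Main "HOL-Library.Product_Plus"
    Complex_Main
begin

definition mdeg :: "nat \<times> nat \<Rightarrow> nat" where
  "mdeg \<alpha> = fst \<alpha> + snd \<alpha>"

definition madd :: "nat \<times> nat \<Rightarrow> nat \<times> nat \<Rightarrow> nat \<times> nat" where
  "madd \<alpha> \<beta> = (fst \<alpha> + fst \<beta>, snd \<alpha> + snd \<beta>)"

definition mono :: "nat \<times> nat \<Rightarrow> real \<times> real \<Rightarrow> real" where
  "mono \<alpha> x = fst x ^ fst \<alpha> * snd x ^ snd \<alpha>"

definition f :: "real \<times> real \<Rightarrow> real" where
  "f x = (-2 + fst x + snd x)^2"

definition g :: "real \<times> real \<Rightarrow> real" where
  "g x = 1 - (fst x)^2 - (snd x)^2"

text \<open>Coefficients of f = 4 - 4 x1 - 4 x2 + x1^2 + 2 x1 x2 + x2^2.\<close>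
definition f_coef :: "nat \<times> nat \<Rightarrow> real" where
  "f_coef \<alpha> =
    (if \<alpha> = (0,0) then 4
     else if \<alpha> = (1,0) then -4
     else if \<alpha> = (0,1) then -4
     else if \<alpha> = (2,0) then 1
     else if \<alpha> = (1,1) then 2
     else if \<alpha> = (0,2) then 1
     else 0)"

lemma f_coef_correct: "f x = (\<Sum>\<alpha>\<in>{\<alpha>. f_coef \<alpha> \<noteq> 0}. f_coef \<alpha> * mono \<alpha> x)"
proof -
  have S: "{\<alpha>. f_coef \<alpha> \<noteq> 0} = {(0,0),(1,0),(0,1),(2,0),(1,1),(0,2)}"
    by (auto simp: f_coef_def split: if_splits)
  have "(\<Sum>\<alpha>\<in>{\<alpha>. f_coef \<alpha> \<noteq> 0}. f_coef \<alpha> * mono \<alpha> x)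
      = (\<Sum>\<alpha>\<in>{(0,0),(1,0),(0,1),(2,0),(1,1),(0,2)}. f_coef \<alpha> * mono \<alpha> x)"
    by (simp only: S)
  also have "\<dots> = f x"
    by (simp add: f_coef_def mono_def f_def power2_eq_square algebra_simps)
  finally show ?thesis by simp
qed

definition SDSOS :: "nat \<Rightarrow> (real \<times> real \<Rightarrow> real) set" where
  "SDSOS d = {\<sigma>. \<exists>ts :: (real \<times> real \<times> (nat \<times> nat) \<times> (nat \<times> nat)) list.
      (\<forall>(p, q, \<alpha>, \<beta>) \<in> set ts. mdeg \<alpha> \<le> d \<and> mdeg \<beta> \<le> d) \<and>
      (\<forall>x. \<sigma> x = (\<Sum>(p, q, \<alpha>, \<beta>) \<leftarrow> ts. (p * mono \<alpha> x + q * mono \<beta> x)^2))}"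

definition Ly :: "(nat \<times> nat \<Rightarrow> real) \<Rightarrow> (nat \<times> nat \<Rightarrow> real) \<Rightarrow> real" where
  "Ly y p = (\<Sum>\<alpha>\<in>{\<alpha>. p \<alpha> \<noteq> 0}. p \<alpha> * y \<alpha>)"

definition psd_on :: "'i set \<Rightarrow> ('i \<Rightarrow> 'i \<Rightarrow> real) \<Rightarrow> bool" where
  "psd_on J M \<longleftrightarrow> (\<forall>v :: 'i \<Rightarrow> real. 0 \<le> (\<Sum>i\<in>J. \<Sum>j\<in>J. v i * M i j * v j))"

definition psd_principal_le2 :: "'i set \<Rightarrow> ('i \<Rightarrow> 'i \<Rightarrow> real) \<Rightarrow> bool" where
  "psd_principal_le2 I M \<longleftrightarrow> (\<forall>J. J \<subseteq> I \<and> finite J \<and> card J \<le> 2 \<longrightarrow> psd_on J M)"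

definition idx :: "nat \<Rightarrow> (nat \<times> nat) set" where
  "idx d = {\<alpha>. mdeg \<alpha> \<le> d}"

text \<open>Moment matrix M_d(y) and localizing matrix M_{d-1}(g y) (as entry functions; the
  index set is idx d, resp. idx (d-1)).\<close>
definition moment_mat :: "(nat \<times> nat \<Rightarrow> real) \<Rightarrow> nat \<times> nat \<Rightarrow> nat \<times> nat \<Rightarrow> real" where
  "moment_mat y \<alpha> \<beta> = y (madd \<alpha> \<beta>)"

definition loc_mat :: "(nat \<times> nat \<Rightarrow> real) \<Rightarrow> nat \<times> nat \<Rightarrow> nat \<times> nat \<Rightarrow> real" where
  "loc_mat y \<alpha> \<beta> = y (madd \<alpha> \<beta>) - y (madd (madd \<alpha> \<beta>) (2,0)) - y (madd (madd \<alpha> \<beta>) (0,2))"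

definition sdsos_feasible :: "nat \<Rightarrow> real set" where
  "sdsos_feasible d = {lam. \<exists>\<sigma>0 \<sigma>1. \<sigma>0 \<in> SDSOS d \<and> \<sigma>1 \<in> SDSOS (d - 1) \<and>
        (\<forall>x. f x - lam = \<sigma>0 x + \<sigma>1 x * g x)}"

text \<open>Objective values of feasible points of the relaxed moment (primal) problem.
  Only the entries y_alpha with |alpha| <= 2d are used.\<close>
definition moment_feasible :: "nat \<Rightarrow> real set" where
  "moment_feasible d = {Ly y f_coef | y. y (0,0) = 1 \<and>
        psd_principal_le2 (idx d) (moment_mat y) \<and>
        psd_principal_le2 (idx (d - 1)) (loc_mat y)}"

end

theory Submission
  imports Defs
begin

lemma part1:
  assumes "g x \<ge> 0" shows "f x \<ge> 2 * (3 - 2 * sqrt 2)"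
proof -
  obtain a b where x: "x = (a,b)" by (cases x)
  have h: "a^2 + b^2 \<le> 1" using assms by (simp add: g_def x)
  have "(a+b)^2 + (a-b)^2 = 2*(a^2+b^2)" by (simp add: power2_eq_square algebra_simps)
  moreover have "(a-b)^2 \<ge> 0" by simp
  ultimately have "(a+b)^2 \<le> 2" using h by (smt (verit))
  hence "sqrt ((a+b)^2) \<le> sqrt 2" by (rule real_sqrt_le_mono)
  hence ab: "a + b \<le> sqrt 2" by simp
  have s2: "sqrt 2 < 2" by (rule sqrt2_less_2)
  have "(2 - sqrt 2)^2 \<le> (2 - a - b)^2"
    by (rule power_mono) (use ab s2 in auto)
  moreover have "(2 - sqrt 2)^2 = 2 * (3 - 2 * sqrt 2)"
    by (simp add: power2_diff algebra_simps)
  moreover have "f x = (2 - a - b)^2" by (simp add: f_def x power2_commute algebra_simps)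
  ultimately show ?thesis by simp
qed

definition ss :: real where "ss = sqrt 2 / 2"

lemma ss_sq: "ss^2 = 1/2" by (simp add: ss_def power_divide)
lemma ss_sq': "ss * ss = 1/2" using ss_sq by (simp add: power2_eq_square)

definition Lf :: "(real \<times> real \<Rightarrow> real) \<Rightarrow> real" where
  "Lf h = (h (ss,ss) + h (-ss,ss) + h (ss,-ss) - h (-ss,-ss)) / 2"

lemma quad_nonneg:
  fixes A B u1 u2 v1 v2 :: real
  assumes "u1^2 = 1" "u2^2 = 1" "v1^2 = 1" "v2^2 = 1"
  shows "0 \<le> ((A+B)^2 + (u1*A + v1*B)^2 + (u2*A + v2*B)^2 - (u1*u2*A + v1*v2*B)^2)/2"
proof -
  define w where "w = 1 + u1*v1 + u2*v2 - u1*u2*(v1*v2)"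
  have e: "((A+B)^2 + (u1*A + v1*B)^2 + (u2*A + v2*B)^2 - (u1*u2*A + v1*v2*B)^2)/2
     = A^2 * ((1 + u1^2 + u2^2 - u1^2*u2^2)/2) + B^2 * ((1 + v1^2 + v2^2 - v1^2*v2^2)/2) + w*A*B"
    unfolding w_def by (simp add: power2_eq_square field_simps)
  have u: "u1 = 1 \<or> u1 = -1" "u2 = 1 \<or> u2 = -1" "v1 = 1 \<or> v1 = -1" "v2 = 1 \<or> v2 = -1"
    using assms by (simp_all add: power2_eq_1_iff)
  have uv: "u1*v1 = 1 \<or> u1*v1 = -1" "u2*v2 = 1 \<or> u2*v2 = -1" using u by auto
  define p where "p = u1*v1"
  define q where "q = u2*v2"
  have wpq: "w = 1 + p + q - p*q" unfolding w_def p_def q_def by (simp add: algebra_simps)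
  have "w = 2 \<or> w = -2" unfolding wpq using uv[folded p_def q_def] by auto
  moreover have "0 \<le> A^2 + B^2 + 2*A*B" "0 \<le> A^2 + B^2 - 2*A*B"
    using zero_le_power2[of "A+B"] zero_le_power2[of "A-B"] by (simp_all add: power2_eq_square algebra_simps)
  ultimately show ?thesis unfolding e using assms by auto
qed

lemma mono_signs: "mono \<alpha> (a*ss, b*ss) = a ^ fst \<alpha> * b ^ snd \<alpha> * ss ^ mdeg \<alpha>"
  by (simp add: mono_def mdeg_def power_mult_distrib power_add)

lemma neg1_sq: "(((-1)::real) ^ n)^2 = 1"
  by (simp add: power_mult[symmetric])

lemma negpow: "(- (x::real)) ^ n = (-1) ^ n * x ^ n"
  by (metis mult_minus1 power_mult_distrib)

lemma mono4:
  "mono \<gamma> (ss,ss) = ss ^ mdeg \<gamma>"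
  "mono \<gamma> (-ss,ss) = (-1) ^ fst \<gamma> * ss ^ mdeg \<gamma>"
  "mono \<gamma> (ss,-ss) = (-1) ^ snd \<gamma> * ss ^ mdeg \<gamma>"
  "mono \<gamma> (-ss,-ss) = (-1) ^ fst \<gamma> * (-1) ^ snd \<gamma> * ss ^ mdeg \<gamma>"
  by (simp_all add: mono_def mdeg_def power_add negpow[of ss])

lemma Lf_term: "0 \<le> Lf (\<lambda>x. (p * mono \<alpha> x + q * mono \<beta> x)^2)"
proof -
  define A where "A = p * ss ^ mdeg \<alpha>"
  define B where "B = q * ss ^ mdeg \<beta>"
  define u1 :: real where "u1 = (-1) ^ fst \<alpha>"
  define u2 :: real where "u2 = (-1) ^ snd \<alpha>"
  define v1 :: real where "v1 = (-1) ^ fst \<beta>"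
  define v2 :: real where "v2 = (-1) ^ snd \<beta>"
  have "Lf (\<lambda>x. (p * mono \<alpha> x + q * mono \<beta> x)^2) =
    ((A+B)^2 + (u1*A + v1*B)^2 + (u2*A + v2*B)^2 - (u1*u2*A + v1*v2*B)^2)/2"
    unfolding Lf_def mono4
    by (simp add: A_def B_def u1_def u2_def v1_def v2_def algebra_simps)
  also have "\<dots> \<ge> 0" by (rule quad_nonneg) (simp_all add: u1_def u2_def v1_def v2_def neg1_sq)
  finally show ?thesis .
qed

lemma Lf_add: "Lf (\<lambda>x. h1 x + h2 x) = Lf h1 + Lf h2"
  unfolding Lf_def by (simp add: field_simps)

lemma Lf_sdsos: assumes "\<sigma> \<in> SDSOS d" shows "0 \<le> Lf \<sigma>"
proof -
  obtain ts :: "(real \<times> real \<times> (nat \<times> nat) \<times> (nat \<times> nat)) list" where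
    ts: "\<forall>x. \<sigma> x = (\<Sum>(p, q, \<alpha>, \<beta>) \<leftarrow> ts. (p * mono \<alpha> x + q * mono \<beta> x)^2)"
    using assms unfolding SDSOS_def by blast
  have "\<sigma> = (\<lambda>x. \<Sum>(p, q, \<alpha>, \<beta>) \<leftarrow> ts. (p * mono \<alpha> x + q * mono \<beta> x)^2)"
    using ts by auto
  moreover have "0 \<le> Lf (\<lambda>x. \<Sum>(p, q, \<alpha>, \<beta>) \<leftarrow> ts. (p * mono \<alpha> x + q * mono \<beta> x)^2)"
  proof (induction ts)
    case Nil then show ?case by (simp add: Lf_def)
  next
    case (Cons t ts)
    obtain p q \<alpha> \<beta> where t: "t = (p,q,\<alpha>,\<beta>)" by (cases t) auto
    have "Lf (\<lambda>x. \<Sum>(p, q, \<alpha>, \<beta>) \<leftarrow> t # ts. (p * mono \<alpha> x + q * mono \<beta> x)^2)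
      = Lf (\<lambda>x. (p * mono \<alpha> x + q * mono \<beta> x)^2) + Lf (\<lambda>x. \<Sum>(p, q, \<alpha>, \<beta>) \<leftarrow> ts. (p * mono \<alpha> x + q * mono \<beta> x)^2)"
      by (simp add: t Lf_add)
    then show ?case using Cons Lf_term[of p \<alpha> q \<beta>] by linarith
  qed
  ultimately show ?thesis by simp
qed

lemma sdsos_upper: assumes "lam \<in> sdsos_feasible d" shows "lam \<le> 4 * (1 - sqrt 2)"
proof -
  obtain s0 s1 where s0: "s0 \<in> SDSOS d" and s1: "s1 \<in> SDSOS (d-1)"
    and eq: "\<forall>x. f x - lam = s0 x + s1 x * g x"
    using assms unfolding sdsos_feasible_def by blast
  have g0: "g (ss,ss) = 0" "g (-ss,ss) = 0" "g (ss,-ss) = 0" "g (-ss,-ss) = 0"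
    by (simp_all add: g_def ss_sq)
  have "Lf (\<lambda>x. f x - lam) = Lf s0"
    using eq g0 by (simp add: Lf_def)
  moreover have "Lf (\<lambda>x. f x - lam) = 4 * (1 - sqrt 2) - lam"
    apply (simp add: Lf_def f_def power2_eq_square algebra_simps ss_sq' ss_def)
    by (simp add: field_simps)
  ultimately show ?thesis using Lf_sdsos[OF s0] by linarith
qed

definition yy :: "nat \<times> nat \<Rightarrow> real" where
  "yy \<gamma> = (-1) ^ (fst \<gamma> * snd \<gamma>) * ss ^ mdeg \<gamma>"

lemma fcoef_set: "{\<alpha>. f_coef \<alpha> \<noteq> 0} = {(0,0),(1,0),(0,1),(2,0),(1,1),(0,2)}"
  by (auto simp: f_coef_def split: if_splits)

lemma Ly_f: "Ly y f_coef = 4*y(0,0) - 4*y(1,0) - 4*y(0,1) + y(2,0) + 2*y(1,1) + y(0,2)"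
  unfolding Ly_def fcoef_set by (simp add: f_coef_def)

lemma Ly_yy: "Ly yy f_coef = 4 * (1 - sqrt 2)"
  unfolding Ly_f by (simp add: yy_def mdeg_def ss_sq ss_def power2_eq_square)

lemma card_le2:
  assumes "finite J" "card J \<le> 2"
  shows "J = {} \<or> (\<exists>a. J = {a}) \<or> (\<exists>a b. a \<noteq> b \<and> J = {a,b})"
proof -
  have "card J = 0 \<or> card J = 1 \<or> card J = 2" using assms(2) by linarith
  thus ?thesis using assms(1) by (auto simp: card_1_singleton_iff card_2_iff)
qed

lemma psd2:
  assumes "a \<noteq> b" "M a a = Sa^2" "M b b = Sb^2" "M a b = e*Sa*Sb" "M b a = e*Sa*Sb" "e^2 = 1"
  shows "psd_on {a,b} M"
  unfolding psd_on_def
proof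
  fix v
  have "(\<Sum>i\<in>{a,b}. \<Sum>j\<in>{a,b}. v i * M i j * v j) = (v a * Sa + e * v b * Sb)^2"
    using assms by (simp add: power2_eq_square algebra_simps)
  thus "0 \<le> (\<Sum>i\<in>{a,b}. \<Sum>j\<in>{a,b}. v i * M i j * v j)" by simp
qed

lemma psd1: assumes "M a a \<ge> 0" shows "psd_on {a} M"
  unfolding psd_on_def
proof
  fix v
  have "0 \<le> M a a * (v a * v a)" using assms by simp
  moreover have "(\<Sum>i\<in>{a}. \<Sum>j\<in>{a}. v i * M i j * v j) = M a a * (v a * v a)" by (simp add: mult_ac)
  ultimately show "0 \<le> (\<Sum>i\<in>{a}. \<Sum>j\<in>{a}. v i * M i j * v j)" by linarith
qed

lemma yy_madd: "yy (madd a b) = (-1) ^ ((fst a + fst b) * (snd a + snd b)) * ss ^ mdeg a * ss ^ mdeg b"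
  by (simp add: yy_def madd_def mdeg_def power_add)

lemma even_m1: "((-1)::real) ^ ((x + x) * (y + y)) = 1"
proof -
  have "(x + x) * (y + y) = 2 * (2 * x * y)" by (simp add: algebra_simps)
  thus ?thesis by (simp only: power_mult) simp
qed

lemma moment_psd: "psd_principal_le2 I (moment_mat yy)"
  unfolding psd_principal_le2_def
proof (intro allI impI)
  fix J assume J: "J \<subseteq> I \<and> finite J \<and> card J \<le> 2"
  from card_le2[of J] J consider "J = {}" | a where "J = {a}" | a b where "a \<noteq> b" "J = {a,b}" by blast
  then show "psd_on J (moment_mat yy)"
  proof cases
    case 1 then show ?thesis by (simp add: psd_on_def)
  next
    case (2 a) show ?thesis unfolding 2
      by (intro psd1) (simp add: moment_mat_def yy_madd even_m1)
  next
    case (3 a b)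
    show ?thesis unfolding 3(2)
      apply (rule psd2[OF 3(1), where Sa = "ss ^ mdeg a" and Sb = "ss ^ mdeg b"
            and e = "(-1) ^ ((fst a + fst b) * (snd a + snd b))"])
      by (simp_all add: moment_mat_def yy_madd even_m1 power2_eq_square neg1_sq add.commute mult.commute)
  qed
qed

lemma loc_zero: "loc_mat yy a b = 0"
proof -
  obtain i j where ij: "madd a b = (i,j)" by (cases "madd a b")
  have m1: "madd (i,j) (2,0) = (i+2, j)" "madd (i,j) (0,2) = (i, j+2)" by (simp_all add: madd_def)
  have p1: "((-1)::real) ^ ((i+2)*j) = (-1)^(i*j)"
    by (simp add: algebra_simps power_add power_mult)
  have p2: "((-1)::real) ^ (i*(j+2)) = (-1)^(i*j)"
    by (simp add: algebra_simps power_add power_mult)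
  have y1: "yy (i+2, j) = (-1)^(i*j) * ss^(i+j) * ss^2"
    unfolding yy_def mdeg_def fst_conv snd_conv p1 by (simp add: power_add mult_ac power2_eq_square)
  have y2: "yy (i, j+2) = (-1)^(i*j) * ss^(i+j) * ss^2"
    unfolding yy_def mdeg_def fst_conv snd_conv p2 by (simp add: power_add mult_ac power2_eq_square)
  have y0: "yy (i, j) = (-1)^(i*j) * ss^(i+j)"
    unfolding yy_def mdeg_def by simp
  show ?thesis unfolding loc_mat_def ij m1 y0 y1 y2 ss_sq by simp
qed

lemma loc_psd: "psd_principal_le2 I (loc_mat yy)"
  unfolding psd_principal_le2_def psd_on_def by (simp add: loc_zero)

lemma yy_feasible: "4 * (1 - sqrt 2) \<in> moment_feasible d"
  unfolding moment_feasible_def mem_Collect_eq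
  apply (rule exI[of _ yy])
  using Ly_yy moment_psd loc_psd by (simp add: yy_def mdeg_def)

lemma moment_lower:
  assumes "v \<in> moment_feasible d" "d \<ge> 1"
  shows "4 * (1 - sqrt 2) \<le> v"
proof -
  obtain y where v: "v = Ly y f_coef" and y0: "y (0,0) = 1"
    and M: "psd_principal_le2 (idx d) (moment_mat y)"
    and L: "psd_principal_le2 (idx (d - 1)) (loc_mat y)"
    using assms(1) unfolding moment_feasible_def by blast
  have i: "(0,0) \<in> idx d" "(1,0) \<in> idx d" "(0,1) \<in> idx d" "(0,0) \<in> idx (d-1)"
    using assms(2) by (auto simp: idx_def mdeg_def)
  have "psd_on {(0,0),(1,0)} (moment_mat y)" using M i by (auto simp: psd_principal_le2_def)
  from this[unfolded psd_on_def, rule_format, of "\<lambda>k. if k = (0,0) then y (1,0) else -1"]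
  have h1: "y (1,0)^2 \<le> y (2,0)" by (simp add: moment_mat_def madd_def y0 power2_eq_square numeral_2_eq_2)
  have "psd_on {(0,0),(0,1)} (moment_mat y)" using M i by (auto simp: psd_principal_le2_def)
  from this[unfolded psd_on_def, rule_format, of "\<lambda>k. if k = (0,0) then y (0,1) else -1"]
  have h2: "y (0,1)^2 \<le> y (0,2)" by (simp add: moment_mat_def madd_def y0 power2_eq_square numeral_2_eq_2)
  have "psd_on {(1,0),(0,1)} (moment_mat y)" using M i by (auto simp: psd_principal_le2_def)
  from this[unfolded psd_on_def, rule_format, of "\<lambda>k. 1"]
  have h3: "0 \<le> y (2,0) + 2 * y (1,1) + y (0,2)" by (simp add: moment_mat_def madd_def numeral_2_eq_2)
  have "psd_on {(0,0)} (loc_mat y)" using L i by (auto simp: psd_principal_le2_def)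
  from this[unfolded psd_on_def, rule_format, of "\<lambda>k. 1"]
  have h4: "y (2,0) + y (0,2) \<le> 1" by (simp add: loc_mat_def madd_def y0 numeral_2_eq_2)
  have "(y (1,0) + y (0,1))^2 + (y (1,0) - y (0,1))^2 = 2*(y (1,0)^2 + y (0,1)^2)"
    by (simp add: power2_eq_square algebra_simps)
  moreover have "(y (1,0) - y (0,1))^2 \<ge> 0" by simp
  ultimately have "(y (1,0) + y (0,1))^2 \<le> 2" using h1 h2 h4 by (smt (verit))
  hence "sqrt ((y (1,0) + y (0,1))^2) \<le> sqrt 2" by (rule real_sqrt_le_mono)
  hence "y (1,0) + y (0,1) \<le> sqrt 2" by simp
  thus ?thesis unfolding v Ly_f using y0 h3 by (smt (verit))
qed

definition kk :: real where "kk = sqrt (2 * sqrt 2)"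

definition sig0 :: "real \<times> real \<Rightarrow> real" where
  "sig0 x = (\<Sum>(p, q, \<alpha>, \<beta>) \<leftarrow> [(1,1,(1,0),(0,1)), (kk, -kk*ss, (1,0),(0,0)), (kk, -kk*ss, (0,1),(0,0))].
     (p * mono \<alpha> x + q * mono \<beta> x)^2)"

definition sig1 :: "real \<times> real \<Rightarrow> real" where
  "sig1 x = (\<Sum>(p, q, \<alpha>, \<beta>) \<leftarrow> [(kk, 0, (0,0), (0,0))]. (p * mono \<alpha> x + q * mono \<beta> x)^2)"

lemma sig0_in: "d \<ge> 1 \<Longrightarrow> sig0 \<in> SDSOS d"
  unfolding SDSOS_def
  by (rule CollectI, rule exI[where x = "[(1,1,(1,0),(0,1)), (kk, -kk*ss, (1,0),(0,0)), (kk, -kk*ss, (0,1),(0,0))]"])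
     (auto simp: mdeg_def sig0_def)

lemma sig1_in: "sig1 \<in> SDSOS d"
  unfolding SDSOS_def
  by (rule CollectI, rule exI[where x = "[(kk, 0, (0,0), (0,0))]"]) (auto simp: mdeg_def sig1_def)

lemma kk_sq: "kk^2 = 2 * sqrt 2" by (simp add: kk_def)

lemma e2g: assumes "(s::real)^2 = 2" shows "(-2+a+b)^2 - 4*(1-s) = (a+b)^2 + 2*s*((a - s/2)^2 + (b - s/2)^2) + 2*s*(1-a^2-b^2)"
proof -
  have "(a - s/2)^2 + (b - s/2)^2 = a^2 + b^2 - s*(a+b) + s^2/2" by (simp add: power2_eq_square field_simps)
  hence "2*s*((a - s/2)^2 + (b - s/2)^2) + 2*s*(1-a^2-b^2) = 2*s - 2*s^2*(a+b) + s*s^2" by (simp add: algebra_simps power2_eq_square)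
  also have "\<dots> = 4*s - 4*(a+b)" using assms by simp
  finally show ?thesis by (simp add: power2_eq_square algebra_simps)
qed

lemma cert: "f x - 4 * (1 - sqrt 2) = sig0 x + sig1 x * g x"
proof -
  obtain a b where x: "x = (a,b)" by (cases x)
  have s2: "sqrt 2 ^ 2 = 2" by simp
  have ssd: "2 * ss = sqrt 2" by (simp add: ss_def)
  have e0: "sig0 (a,b) = (a+b)^2 + kk^2 * ((a-ss)^2 + (b-ss)^2)"
    by (simp add: sig0_def mono_def power2_eq_square algebra_simps)
  have e1: "sig1 (a,b) = kk^2" by (simp add: sig1_def mono_def)
  have e2: "(-2+a+b)^2 - 4 * (1 - sqrt 2) = (a+b)^2 + 2 * sqrt 2 * ((a - sqrt 2 / 2)^2 + (b - sqrt 2 / 2)^2)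
      + 2 * sqrt 2 * (1 - a^2 - b^2)"
    by (rule e2g) simp
  show ?thesis unfolding x e0 e1 kk_sq f_def g_def fst_conv snd_conv e2 ss_def
    by simp
qed

lemma sdsos_in: "d \<ge> 1 \<Longrightarrow> 4 * (1 - sqrt 2) \<in> sdsos_feasible d"
  unfolding sdsos_feasible_def using sig0_in sig1_in cert by blast

theorem mainTheorem2:
  shows "(\<forall>x. g x \<ge> 0 \<longrightarrow> f x \<ge> 2 * (3 - 2 * sqrt 2)) \<and>
         (\<exists>x. g x \<ge> 0 \<and> f x = 2 * (3 - 2 * sqrt 2)) \<and>
         (\<forall>d::nat. d \<ge> 1 \<longrightarrow>
            sdsos_feasible d \<noteq> {} \<and> bdd_above (sdsos_feasible d) \<and>
            Sup (sdsos_feasible d) = 4 * (1 - sqrt 2) \<and>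
            moment_feasible d \<noteq> {} \<and> bdd_below (moment_feasible d) \<and>
            Inf (moment_feasible d) = 4 * (1 - sqrt 2)) \<and>
         4 * (1 - sqrt 2) < 2 * (3 - 2 * sqrt 2) \<and>
         2 * (3 - 2 * sqrt 2) - 4 * (1 - sqrt 2) = 2"
proof (intro conjI allI impI)
  show "\<And>x. g x \<ge> 0 \<Longrightarrow> f x \<ge> 2 * (3 - 2 * sqrt 2)" by (rule part1)
  have "g (ss,ss) \<ge> 0 \<and> f (ss,ss) = 2 * (3 - 2 * sqrt 2)"
    by (simp add: g_def f_def ss_sq power2_eq_square ss_def algebra_simps)
  thus "\<exists>x. g x \<ge> 0 \<and> f x = 2 * (3 - 2 * sqrt 2)" by blast
  fix d :: nat assume d: "d \<ge> 1"
  show "sdsos_feasible d \<noteq> {}" using sdsos_in[OF d] by blast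
  show "bdd_above (sdsos_feasible d)" using sdsos_upper by (auto simp: bdd_above_def)
  show "Sup (sdsos_feasible d) = 4 * (1 - sqrt 2)"
    by (rule cSup_eq_maximum) (use sdsos_in[OF d] sdsos_upper in auto)
  show "moment_feasible d \<noteq> {}" using yy_feasible by blast
  show "bdd_below (moment_feasible d)" using moment_lower d by (auto simp: bdd_below_def)
  show "Inf (moment_feasible d) = 4 * (1 - sqrt 2)"
    by (rule cInf_eq_minimum) (use yy_feasible moment_lower d in auto)
next
  have "sqrt 2 < 2" by (rule sqrt2_less_2)
  thus "4 * (1 - sqrt 2) < 2 * (3 - 2 * sqrt 2)" by simp
  show "2 * (3 - 2 * sqrt 2) - 4 * (1 - sqrt 2) = 2" by simp
qed

end
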